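(* For each $t\in\{0,1,\dots,T-1\}$, $k\in\mathbb{N}_0$ and $i\in\{1,\dots,N\}$, there exists a target level $\delta_i^{(k,t)}\in\mathbb{Z}$ such that in state $(x,k)$ at epoch $t$ the action $a=\delta_i^{(k,t)}$ is optimal if $x<\delta_i^{(k,t)}$ and the action $a=x$ is optimal otherwise; specifically one may take $\delta_i^{(k,t)}$ to be the smallest minimizer over $a\in\mathbb{Z}$ of $G^{N,i}_t(a,k)$. Moreover, with this choice, $\delta_i^{(k,t)}$ is non-decreasing in $k$.
   Context: Spare parts setting. Fix integers $N\ge1$, $T\ge1$, reals $\alpha_0,\beta_0>0$, and for each $i\in\{1,\dots,N\}$ unit costs $c_v^i,c_h^i,c_b^i>0$ (transportation, holding, backorder) with $c_b^i>c_v^i$. $\mathbb{N}_0=\{0,1,2,\dots\}$, $y^+=\max(y,0)$. For real $r>0$ and $p\in(0,1)$, $NB(r,p)$ is the distribution on $\mathbb{N}_0$ with $P(n)=\frac{\Gamma(n+r)}{\Gamma(r)n!}p^r(1-p)^n$; $NB(0,p)$ is the point mass at $0$. For $t\in\{0,\dots,T\}$ let $p_t=\frac{\beta_0+Nt}{\beta_0+Nt+1}$. At epoch $t$ and statistic $k$ let $Z\sim NB(\alpha_0+k,p_t)$, $K\sim NB((N-1)(\alpha_0+k),p_t)$ independent, and $C_i(a,x,k)=c_v^i(a-x)+c_h^i\mathbb{E}[(a-Z)^+]+c_b^i\mathbb{E}[(Z-a)^+]$. Define $\tilde V^{N,i}_T\equiv0$ and for $t=T-1,\dots,0$, $(x,k)\in\mathbb{Z}\times\mathbb{N}_0$: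 $\tilde V^{N,i}_t(x,k)=\min_{a\in\mathbb{Z},a\ge x}\{C_i(a,x,k)+\mathbb{E}[\tilde V^{N,i}_{t+1}(a-Z,k+Z+K)]\}$. An action (post-order inventory level) $a\ge x$ is optimal if it attains this minimum. For $t\in\{0,\dots,T-1\}$ let $G^{N,i}_t(a,k)=c_v^ia+c_h^i\mathbb{E}[(a-Z)^+]+c_b^i\mathbb{E}[(Z-a)^+]+\mathbb{E}[\tilde V^{N,i}_{t+1}(a-Z,k+Z+K)]$, so that $\tilde V^{N,i}_t(x,k)=\min_{a\ge x}\{G^{N,i}_t(a,k)-c_v^ix\}$. *)

theory Defs
  imports "HOL-Analysis.Analysis"
begin

definition nb_pmf :: "real \<Rightarrow> real \<Rightarrow> nat \<Rightarrow> real" where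
  "nb_pmf r p n =
     (if r = 0 then (if n = 0 then 1 else 0)
      else Gamma (real n + r) / (Gamma r * fact n) * p powr r * (1 - p) ^ n)"

definition p_ep :: "real \<Rightarrow> nat \<Rightarrow> nat \<Rightarrow> real" where
  "p_ep beta0 N t = (beta0 + real N * real t) / (beta0 + real N * real t + 1)"

definition E_hold :: "real \<Rightarrow> real \<Rightarrow> nat \<Rightarrow> nat \<Rightarrow> int \<Rightarrow> nat \<Rightarrow> real" where
  "E_hold alpha0 beta0 N t a k =
     (\<Sum>\<^sub>\<infinity>n\<in>UNIV. nb_pmf (alpha0 + real k) (p_ep beta0 N t) n * max (real_of_int a - real n) 0)"

definition E_back :: "real \<Rightarrow> real \<Rightarrow> nat \<Rightarrow> nat \<Rightarrow> int \<Rightarrow> nat \<Rightarrow> real" where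
  "E_back alpha0 beta0 N t a k =
     (\<Sum>\<^sub>\<infinity>n\<in>UNIV. nb_pmf (alpha0 + real k) (p_ep beta0 N t) n * max (real n - real_of_int a) 0)"

definition E_next :: "real \<Rightarrow> real \<Rightarrow> nat \<Rightarrow> nat \<Rightarrow> (int \<Rightarrow> nat \<Rightarrow> real) \<Rightarrow> int \<Rightarrow> nat \<Rightarrow> real" where
  "E_next alpha0 beta0 N t V a k =
     (\<Sum>\<^sub>\<infinity>(z, j)\<in>UNIV.
        nb_pmf (alpha0 + real k) (p_ep beta0 N t) z
        * nb_pmf ((real N - 1) * (alpha0 + real k)) (p_ep beta0 N t) j
        * V (a - int z) (k + z + j))"

definition C_cost :: "real \<Rightarrow> real \<Rightarrow> real \<Rightarrow> real \<Rightarrow> real \<Rightarrow> nat \<Rightarrow> nat \<Rightarrow> int \<Rightarrow> int \<Rightarrow> nat \<Rightarrow> real" where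
  "C_cost cv ch cb alpha0 beta0 N t a x k =
     cv * real_of_int (a - x) + ch * E_hold alpha0 beta0 N t a k + cb * E_back alpha0 beta0 N t a k"

text \<open>Value function indexed by the number m of remaining periods: epoch t = T - m.\<close>
primrec V_rem :: "real \<Rightarrow> real \<Rightarrow> real \<Rightarrow> real \<Rightarrow> real \<Rightarrow> nat \<Rightarrow> nat \<Rightarrow> nat \<Rightarrow> int \<Rightarrow> nat \<Rightarrow> real" where
  "V_rem cv ch cb alpha0 beta0 N T 0 = (\<lambda>x k. 0)"
| "V_rem cv ch cb alpha0 beta0 N T (Suc m) =
     (\<lambda>x k. Inf {C_cost cv ch cb alpha0 beta0 N (T - Suc m) a x k
                  + E_next alpha0 beta0 N (T - Suc m) (V_rem cv ch cb alpha0 beta0 N T m) a k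
                 | a. a \<ge> x})"

definition V_til :: "real \<Rightarrow> real \<Rightarrow> real \<Rightarrow> real \<Rightarrow> real \<Rightarrow> nat \<Rightarrow> nat \<Rightarrow> nat \<Rightarrow> int \<Rightarrow> nat \<Rightarrow> real" where
  "V_til cv ch cb alpha0 beta0 N T t = V_rem cv ch cb alpha0 beta0 N T (T - t)"

definition Q_act :: "real \<Rightarrow> real \<Rightarrow> real \<Rightarrow> real \<Rightarrow> real \<Rightarrow> nat \<Rightarrow> nat \<Rightarrow> nat \<Rightarrow> int \<Rightarrow> int \<Rightarrow> nat \<Rightarrow> real" where
  "Q_act cv ch cb alpha0 beta0 N T t a x k =
     C_cost cv ch cb alpha0 beta0 N t a x k
     + E_next alpha0 beta0 N t (V_til cv ch cb alpha0 beta0 N T (t + 1)) a k"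

definition optimal_act :: "real \<Rightarrow> real \<Rightarrow> real \<Rightarrow> real \<Rightarrow> real \<Rightarrow> nat \<Rightarrow> nat \<Rightarrow> nat \<Rightarrow> int \<Rightarrow> nat \<Rightarrow> int \<Rightarrow> bool" where
  "optimal_act cv ch cb alpha0 beta0 N T t x k a \<longleftrightarrow>
     x \<le> a \<and> (\<forall>b\<ge>x. Q_act cv ch cb alpha0 beta0 N T t a x k \<le> Q_act cv ch cb alpha0 beta0 N T t b x k)"

definition G_fun :: "real \<Rightarrow> real \<Rightarrow> real \<Rightarrow> real \<Rightarrow> real \<Rightarrow> nat \<Rightarrow> nat \<Rightarrow> nat \<Rightarrow> int \<Rightarrow> nat \<Rightarrow> real" where
  "G_fun cv ch cb alpha0 beta0 N T t a k =
     cv * real_of_int a + ch * E_hold alpha0 beta0 N t a k + cb * E_back alpha0 beta0 N t a k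
     + E_next alpha0 beta0 N t (V_til cv ch cb alpha0 beta0 N T (t + 1)) a k"

definition smallest_minimizer :: "(int \<Rightarrow> real) \<Rightarrow> int \<Rightarrow> bool" where
  "smallest_minimizer g d \<longleftrightarrow> (\<forall>b. g d \<le> g b) \<and> (\<forall>b<d. g d < g b)"

end

theory Submission
  imports Defs "HOL-Analysis.Analysis"
begin


definition nbf :: "real \<Rightarrow> real \<Rightarrow> nat \<Rightarrow> real" where
  "nbf r p n = p powr r * pochhammer r n / fact n * (1 - p) ^ n"

lemma nb_eq:
  assumes "r \<ge> 0" "p > 0"
  shows "nb_pmf r p n = nbf r p n"
proof (cases "r = 0")
  case True
  then show ?thesis using assms by (simp add: nb_pmf_def nbf_def pochhammer_0_left)
next
  case False
  hence "r > 0" using assms by simp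
  hence "r \<notin> \<int>\<^sub>\<le>\<^sub>0" by (auto elim!: nonpos_Ints_cases)
  hence "pochhammer r n = Gamma (r + real n) / Gamma r" by (rule pochhammer_Gamma)
  then show ?thesis using False by (simp add: nb_pmf_def nbf_def add.commute)
qed

lemma nbf_nonneg: "r \<ge> 0 \<Longrightarrow> 0 < p \<Longrightarrow> p < 1 \<Longrightarrow> nbf r p n \<ge> 0"
  unfolding nbf_def by (intro mult_nonneg_nonneg divide_nonneg_nonneg)
     (auto simp: pochhammer_prod intro!: prod_nonneg)

lemma nbf_Suc: "nbf r p (Suc n) = nbf r p n * ((real n + r) / (real n + 1) * (1 - p))"
  unfolding nbf_def by (simp add: pochhammer_rec' field_simps)

lemma nbf_sums:
  assumes "r \<ge> 0" "0 < p" "p < 1"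
  shows "nbf r p sums 1"
proof -
  have "\<bar>-(1-p)\<bar> < 1" using assms by simp
  from gen_binomial_real[OF this, of "-r"]
  have "(\<lambda>n. ((-r) gchoose n) * (-(1-p))^n) sums (p powr (-r))" by simp
  moreover have "((-r) gchoose n) * (-(1-p))^n = pochhammer r n / fact n * (1-p)^n" for n
  proof -
    have "((-r) gchoose n) * (-(1-p))^n = ((r + n - 1) gchoose n) * ((-1)^n * (-1)^n) * (1-p)^n"
    proof -
      have "(-(1-p))^n = (-1)^n * (1-p)^n" by (rule power_minus)
      thus ?thesis by (simp only: gbinomial_minus) (simp add: mult_ac)
    qed
    also have "(-1::real)^n * (-1)^n = 1" by (simp flip: power_add)
    also have "(r + n - 1) gchoose n = pochhammer r n / fact n"
      by (simp add: gbinomial_pochhammer')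
    finally show ?thesis by simp
  qed
  ultimately have "(\<lambda>n. pochhammer r n / fact n * (1-p)^n) sums (p powr (-r))" by simp
  hence "(\<lambda>n. p powr r * (pochhammer r n / fact n * (1-p)^n)) sums (p powr r * p powr (-r))"
    by (rule sums_mult)
  moreover have "p powr r * p powr (-r) = 1" using assms by (simp flip: powr_add)
  ultimately show ?thesis unfolding nbf_def by (simp add: mult_ac)
qed

lemma nbf_mean_summable:
  assumes "r \<ge> 0" "0 < p" "p < 1"
  shows "summable (\<lambda>n. nbf r p n * real n)"
proof (rule summable_ratio_test[where c="(2 - p)/2" and N="nat \<lceil>2*r/p\<rceil> + 1"])
  show "(2 - p)/2 < 1" using assms by simp
  fix n assume n: "nat \<lceil>2*r/p\<rceil> + 1 \<le> n"
  have "2*r/p \<le> real n - 1" using n by linarith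
  hence hn: "2*r \<le> p * (real n - 1)" using assms by (simp add: field_simps)
  have "(1-p)*r \<le> r" using assms by (simp add: algebra_simps)
  hence "(1-p) * (real n + r) \<le> (2 - p)/2 * real n"
  proof -
    have "0 \<le> p*r" using assms by simp
    have e: "(2 - p)/2 * real n - (1-p) * (real n + r) = p * real n / 2 - r + p*r"
      by (simp add: field_simps)
    have "p * (real n - 1) = p * real n - p" by (simp add: algebra_simps)
    hence "2 * r \<le> p * real n" using hn assms by linarith
    hence "0 \<le> (2 - p)/2 * real n - (1-p) * (real n + r)" unfolding e using \<open>0 \<le> p*r\<close> by linarith
    thus ?thesis by linarith
  qed
  hence "nbf r p n * ((1-p) * (real n + r)) \<le> nbf r p n * ((2 - p)/2 * real n)"
    by (intro mult_left_mono nbf_nonneg assms) (auto intro: nbf_nonneg assms)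
  moreover have "nbf r p (Suc n) * real (Suc n) = nbf r p n * ((1-p) * (real n + r))"
    by (simp add: nbf_Suc field_simps)
  moreover have nA: "norm (nbf r p (Suc n) * real (Suc n)) = nbf r p (Suc n) * real (Suc n)"
    using nbf_nonneg[OF assms, of "Suc n"] by simp
  moreover have nB: "norm (nbf r p n * real n) = nbf r p n * real n"
    using nbf_nonneg[OF assms, of n] by simp
  moreover have "(2 - p)/2 * (nbf r p n * real n) = nbf r p n * ((2 - p)/2 * real n)" by simp
  ultimately show "norm (nbf r p (Suc n) * real (Suc n)) \<le> (2 - p)/2 * norm (nbf r p n * real n)"
    unfolding nA nB by linarith
qed

lemma nbf_mean:
  assumes "r \<ge> 0" "0 < p" "p < 1"
  shows "(\<lambda>n. nbf r p n * real n) sums (r * (1-p) / p)"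
proof -
  let ?g = "\<lambda>n. nbf r p n * real n"
  have s: "summable ?g" by (rule nbf_mean_summable[OF assms])
  define \<mu> where "\<mu> = suminf ?g"
  have gs: "?g sums \<mu>" using s unfolding \<mu>_def by (rule summable_sums)
  have "(\<lambda>n. ?g (Suc n)) sums (\<mu> - ?g 0)"
    by (subst sums_Suc_iff) (simp add: gs)
  hence a: "(\<lambda>n. ?g (Suc n)) sums \<mu>" by simp
  have "?g (Suc n) = (1-p) * (?g n + r * nbf r p n)" for n
    by (simp add: nbf_Suc field_simps)
  moreover have "(\<lambda>n. (1-p) * (?g n + r * nbf r p n)) sums ((1-p) * (\<mu> + r * 1))"
    using s nbf_sums[OF assms] unfolding \<mu>_def
    by (intro sums_mult sums_add summable_sums) (auto intro: sums_mult)
  ultimately have "(\<lambda>n. ?g (Suc n)) sums ((1-p) * (\<mu> + r))" by simp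
  with a have "\<mu> = (1-p) * (\<mu> + r)" using sums_unique2 by blast
  hence "\<mu> = r * (1-p) / p" using assms by (simp add: field_simps)
  thus ?thesis using s unfolding \<mu>_def using summable_sums by fastforce
qed



lemma has_sum_diff_r:
  fixes f g :: "'a \<Rightarrow> real"
  assumes "(f has_sum a) A" "(g has_sum b) A"
  shows "((\<lambda>x. f x - g x) has_sum (a - b)) A"
  using has_sum_add[OF assms(1) has_sum_uminusI[OF assms(2)]] by simp

lemma infsum_diff_r:
  fixes f g :: "'a \<Rightarrow> real"
  assumes "f summable_on A" "g summable_on A"
  shows "infsum (\<lambda>x. f x - g x) A = infsum f A - infsum g A"
  by (rule infsumI, rule has_sum_diff_r) (use assms in auto)

definition nice :: "(nat \<Rightarrow> real) \<Rightarrow> bool" where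
  "nice w \<longleftrightarrow> (\<forall>n. w n \<ge> 0) \<and> (w has_sum 1) UNIV \<and> (\<lambda>n. w n * real n) summable_on UNIV"

lemma nice_nbf:
  assumes "r \<ge> 0" "0 < p" "p < 1"
  shows "nice (nbf r p)"
  unfolding nice_def
proof (intro conjI allI)
  show "nbf r p n \<ge> 0" for n by (rule nbf_nonneg[OF assms])
  show "(nbf r p has_sum 1) UNIV"
    by (rule sums_nonneg_imp_has_sum[OF nbf_sums[OF assms]]) (rule nbf_nonneg[OF assms])
  show "(\<lambda>n. nbf r p n * real n) summable_on UNIV"
    by (rule summable_nonneg_imp_summable_on[OF nbf_mean_summable[OF assms]])
       (simp add: nbf_nonneg[OF assms])
qed

lemma nice_nonneg: "nice w \<Longrightarrow> w n \<ge> 0" by (simp add: nice_def)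
lemma nice_sum: "nice w \<Longrightarrow> (w has_sum 1) UNIV" by (simp add: nice_def)
lemma nice_summable: "nice w \<Longrightarrow> w summable_on UNIV" using nice_sum summable_on_def by blast
lemma nice_infsum: "nice w \<Longrightarrow> infsum w UNIV = 1" using nice_sum infsumI by blast
lemma nice_mean: "nice w \<Longrightarrow> (\<lambda>n. w n * real n) summable_on UNIV" by (simp add: nice_def)

lemma nice_lin_summable:
  assumes w: "nice w" and h: "\<And>n. \<bar>h n\<bar> \<le> A + B * real n"
  shows "(\<lambda>n. w n * h n) summable_on UNIV"
proof -
  have "(\<lambda>n. A * w n + B * (w n * real n)) summable_on UNIV"
    by (intro summable_on_add summable_on_cmult_right nice_summable nice_mean w)
  hence "(\<lambda>n. norm (w n * h n)) summable_on UNIV"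
  proof (rule summable_on_comparison_test)
    fix n
    have "norm (w n * h n) = w n * \<bar>h n\<bar>" using nice_nonneg[OF w, of n] by (simp add: abs_mult)
    also have "\<dots> \<le> w n * (A + B * real n)" by (intro mult_left_mono h nice_nonneg[OF w])
    finally show "norm (w n * h n) \<le> A * w n + B * (w n * real n)" by (simp add: algebra_simps)
  qed simp
  thus ?thesis using summable_on_iff_abs_summable_on_real by blast
qed

lemma nice_bdd_summable:
  assumes w: "nice w" and h: "\<And>n. \<bar>h n\<bar> \<le> B"
  shows "(\<lambda>n. w n * h n) summable_on UNIV"
  by (rule nice_lin_summable[OF w, of h B 0]) (use h in simp)

lemma up_closed:
  assumes step: "\<And>n. f n \<le> g n \<Longrightarrow> f (Suc n) \<le> (g (Suc n) :: real)"
  assumes "f n \<le> g n" "n \<le> m"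
  shows "f m \<le> g m"
  using assms(3,2) by (induction m rule: dec_induct) (auto intro: step)

lemma mlr_single:
  assumes f: "nice f" and g: "nice g"
    and step: "\<And>n. f n \<le> g n \<Longrightarrow> f (Suc n) \<le> g (Suc n)"
    and anti: "\<And>m n. m \<le> n \<Longrightarrow> h n \<le> h m"
    and bdd: "\<And>n. \<bar>h n\<bar> \<le> B"
  shows "infsum (\<lambda>n. g n * h n) UNIV \<le> infsum (\<lambda>n. f n * h n) UNIV"
proof -
  define S where "S = {n. f n \<le> g n}"
  define c where "c = (if S = {} then -B else h (LEAST n. n \<in> S))"
  have key: "(g n - f n) * (h n - c) \<le> 0" for n
  proof (cases "S = {}")
    case True
    hence "g n < f n" unfolding S_def by (auto simp: not_le)
    moreover have "h n - c \<ge> 0" using True bdd[of n] unfolding c_def by auto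
    ultimately show ?thesis by (simp add: mult_nonpos_nonneg)
  next
    case False
    define n0 where "n0 = (LEAST n. n \<in> S)"
    have n0S: "n0 \<in> S" unfolding n0_def using False by (auto intro: LeastI)
    have c: "c = h n0" using False unfolding c_def n0_def by simp
    show ?thesis
    proof (cases "n < n0")
      case True
      hence "n \<notin> S" unfolding n0_def using not_less_Least by blast
      hence "g n < f n" unfolding S_def by (auto simp: not_le)
      moreover have "h n - c \<ge> 0" using anti[of n n0] True c by auto
      ultimately show ?thesis by (simp add: mult_nonpos_nonneg)
    next
      case False
      hence "f n \<le> g n" using up_closed[of f g n0 n] step n0S unfolding S_def by auto
      moreover have "h n - c \<le> 0" using anti[of n0 n] False c by auto
      ultimately show ?thesis by (simp add: mult_nonneg_nonpos)
    qed
  qed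
  have sg: "(\<lambda>n. g n * h n) summable_on UNIV" by (rule nice_bdd_summable[OF g bdd])
  have sf: "(\<lambda>n. f n * h n) summable_on UNIV" by (rule nice_bdd_summable[OF f bdd])
  have hs: "((\<lambda>n. (g n * h n - f n * h n) - (c * g n - c * f n)) has_sum
             ((infsum (\<lambda>n. g n * h n) UNIV - infsum (\<lambda>n. f n * h n) UNIV) - (c * 1 - c * 1))) UNIV"
    by (intro has_sum_diff_r has_sum_cmult_right has_sum_infsum sg sf nice_sum f g)
  have "(infsum (\<lambda>n. g n * h n) UNIV - infsum (\<lambda>n. f n * h n) UNIV) - (c * 1 - c * 1) \<le> 0"
    by (rule has_sum_mono[OF hs has_sum_0]) (use key in \<open>auto simp: algebra_simps\<close>)
  thus ?thesis by simp
qed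



lemma nice_bdd_infsum:
  assumes w: "nice w" and h: "\<And>n. \<bar>h n\<bar> \<le> B"
  shows "\<bar>infsum (\<lambda>n. w n * h n) UNIV\<bar> \<le> B"
proof -
  have s: "(\<lambda>n. w n * h n) summable_on UNIV" by (rule nice_bdd_summable[OF w h])
  have sB: "((\<lambda>n. B * w n) has_sum B * 1) UNIV" by (intro has_sum_cmult_right nice_sum w)
  have smB: "((\<lambda>n. (-B) * w n) has_sum (-B) * 1) UNIV" by (intro has_sum_cmult_right nice_sum w)
  have "infsum (\<lambda>n. w n * h n) UNIV \<le> B * 1"
  proof (rule has_sum_mono[OF has_sum_infsum[OF s] sB])
    fix n
    have "h n \<le> B" using h[of n] by linarith
    hence "h n * w n \<le> B * w n" using nice_nonneg[OF w, of n] by (rule mult_right_mono)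
    thus "w n * h n \<le> B * w n" by (simp add: mult.commute)
  qed
  moreover have "(-B) * 1 \<le> infsum (\<lambda>n. w n * h n) UNIV"
  proof (rule has_sum_mono[OF smB has_sum_infsum[OF s]])
    fix n
    have "-B \<le> h n" using h[of n] by linarith
    hence "(-B) * w n \<le> h n * w n" using nice_nonneg[OF w, of n] by (rule mult_right_mono)
    thus "- B * w n \<le> w n * h n" by (simp add: mult.commute)
  qed
  ultimately show ?thesis by simp
qed

lemma pair_lin_summable:
  assumes f: "nice f" and g: "nice g"
    and H: "\<And>z j. \<bar>H z j\<bar> \<le> A + B * real z + C * real j"
    and ABC: "A \<ge> 0" "B \<ge> 0" "C \<ge> 0"
  shows "(\<lambda>(z,j). f z * g j * H z j) summable_on UNIV"
proof -
  define Mg where "Mg = infsum (\<lambda>j. g j * real j) UNIV"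
  define W where "W = (\<lambda>(z,j). f z * g j * (A + B * real z + C * real j))"
  have inner: "((\<lambda>j. W (z, j)) has_sum (f z * (A + B * real z) * 1 + f z * C * Mg)) UNIV" for z
  proof -
    have "((\<lambda>j. f z * (A + B * real z) * g j + f z * C * (g j * real j)) has_sum
            (f z * (A + B * real z) * 1 + f z * C * Mg)) UNIV"
      unfolding Mg_def by (intro has_sum_add has_sum_cmult_right nice_sum g has_sum_infsum nice_mean)
    moreover have "(\<lambda>j. f z * (A + B * real z) * g j + f z * C * (g j * real j)) = (\<lambda>j. W (z, j))"
      by (auto simp: W_def algebra_simps)
    ultimately show ?thesis by simp
  qed
  have outer: "(\<lambda>z. f z * (A + B * real z) * 1 + f z * C * Mg) summable_on UNIV"
  proof -
    have "(\<lambda>z. (A + C * Mg) * f z + B * (f z * real z)) summable_on UNIV"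
      by (intro summable_on_add summable_on_cmult_right nice_summable nice_mean f)
    moreover have "(\<lambda>z. (A + C * Mg) * f z + B * (f z * real z)) = (\<lambda>z. f z * (A + B * real z) * 1 + f z * C * Mg)"
      by (auto simp: algebra_simps)
    ultimately show ?thesis by simp
  qed
  have Wnn: "W x \<ge> 0" for x
    using nice_nonneg[OF f] nice_nonneg[OF g] ABC by (auto simp: W_def split: prod.splits)
  have "W summable_on Sigma UNIV (\<lambda>_. UNIV)"
    by (rule summable_on_SigmaI[OF inner outer]) (use Wnn in auto)
  hence Ws: "W summable_on UNIV" by simp
  have "(\<lambda>x. norm ((\<lambda>(z,j). f z * g j * H z j) x)) summable_on UNIV"
  proof (rule summable_on_comparison_test[OF Ws])
    fix x :: "nat \<times> nat"
    obtain z j where x: "x = (z, j)" by (cases x)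
    have "norm (f z * g j * H z j) = f z * g j * \<bar>H z j\<bar>"
      using nice_nonneg[OF f] nice_nonneg[OF g] by (simp add: abs_mult)
    also have "\<dots> \<le> f z * g j * (A + B * real z + C * real j)"
      by (intro mult_left_mono H mult_nonneg_nonneg nice_nonneg f g)
    finally show "norm ((\<lambda>(z,j). f z * g j * H z j) x) \<le> W x" by (simp add: x W_def)
  qed simp
  thus ?thesis using summable_on_iff_abs_summable_on_real by blast
qed

lemma pair_fubini:
  fixes a b :: "nat \<Rightarrow> real" and H :: "nat \<Rightarrow> nat \<Rightarrow> real"
  assumes s: "(\<lambda>(z,j). a z * b j * H z j) summable_on UNIV"
  shows "infsum (\<lambda>(z,j). a z * b j * H z j) UNIV = infsum (\<lambda>z. a z * infsum (\<lambda>j. b j * H z j) UNIV) UNIV"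
proof -
  have s': "(\<lambda>(z,j). a z * b j * H z j) summable_on Sigma UNIV (\<lambda>_. UNIV)" using s by simp
  have "infsum (\<lambda>z. infsum (\<lambda>j. a z * b j * H z j) UNIV) UNIV = infsum (\<lambda>(z,j). a z * b j * H z j) (Sigma UNIV (\<lambda>_. UNIV))"
    using infsum_Sigma'_banach[of "\<lambda>z j. a z * b j * H z j" UNIV "\<lambda>_. UNIV"] s' by simp
  moreover have "infsum (\<lambda>j. a z * b j * H z j) UNIV = a z * infsum (\<lambda>j. b j * H z j) UNIV" for z
    by (simp add: infsum_cmult_right' mult.assoc)
  ultimately show ?thesis by simp
qed

lemma mlr_pair:
  assumes f1: "nice f1" and g1: "nice g1" and f2: "nice f2" and g2: "nice g2"
    and st1: "\<And>n. f1 n \<le> g1 n \<Longrightarrow> f1 (Suc n) \<le> g1 (Suc n)"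
    and st2: "\<And>n. f2 n \<le> g2 n \<Longrightarrow> f2 (Suc n) \<le> g2 (Suc n)"
    and a1: "\<And>z z' j. z \<le> z' \<Longrightarrow> H z' j \<le> H z j"
    and a2: "\<And>z j j'. j \<le> j' \<Longrightarrow> H z j' \<le> H z j"
    and bdd: "\<And>z j. \<bar>H z j\<bar> \<le> B"
  shows "infsum (\<lambda>(z,j). g1 z * g2 j * H z j) UNIV \<le> infsum (\<lambda>(z,j). f1 z * f2 j * H z j) UNIV"
proof -
  have B0: "B \<ge> 0" using bdd[of 0 0] by simp
  define psi where "psi = (\<lambda>b z. infsum (\<lambda>j. b j * H z j) UNIV)"
  have sg: "(\<lambda>(z,j). g1 z * g2 j * H z j) summable_on UNIV"
    by (rule pair_lin_summable[OF g1 g2, of H B 0 0]) (use bdd B0 in auto)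
  have sf: "(\<lambda>(z,j). f1 z * f2 j * H z j) summable_on UNIV"
    by (rule pair_lin_summable[OF f1 f2, of H B 0 0]) (use bdd B0 in auto)
  have psib: "\<bar>psi b z\<bar> \<le> B" if "nice b" for b z
    unfolding psi_def by (rule nice_bdd_infsum[OF that bdd])
  have "infsum (\<lambda>(z,j). g1 z * g2 j * H z j) UNIV = infsum (\<lambda>z. g1 z * psi g2 z) UNIV"
    unfolding psi_def by (rule pair_fubini[OF sg])
  also have "\<dots> \<le> infsum (\<lambda>z. g1 z * psi f2 z) UNIV"
  proof (rule infsum_mono)
    show "(\<lambda>z. g1 z * psi g2 z) summable_on UNIV" by (rule nice_bdd_summable[OF g1 psib[OF g2]])
    show "(\<lambda>z. g1 z * psi f2 z) summable_on UNIV" by (rule nice_bdd_summable[OF g1 psib[OF f2]])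
    fix z
    have "psi g2 z \<le> psi f2 z" unfolding psi_def
      by (rule mlr_single[OF f2 g2], erule st2, erule a2, rule bdd)
    thus "g1 z * psi g2 z \<le> g1 z * psi f2 z" by (intro mult_left_mono nice_nonneg g1)
  qed
  also have "\<dots> \<le> infsum (\<lambda>z. f1 z * psi f2 z) UNIV"
  proof (rule mlr_single[OF f1 g1 st1 _ psib[OF f2]])
    fix m n :: nat assume "m \<le> n"
    show "psi f2 n \<le> psi f2 m" unfolding psi_def
    proof (rule infsum_mono)
      show "(\<lambda>j. f2 j * H n j) summable_on UNIV" by (rule nice_bdd_summable[OF f2 bdd])
      show "(\<lambda>j. f2 j * H m j) summable_on UNIV" by (rule nice_bdd_summable[OF f2 bdd])
      fix j show "f2 j * H n j \<le> f2 j * H m j" by (intro mult_left_mono a1 \<open>m \<le> n\<close> nice_nonneg f2)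
    qed
  qed
  also have "\<dots> = infsum (\<lambda>(z,j). f1 z * f2 j * H z j) UNIV"
    unfolding psi_def by (rule pair_fubini[OF sf, symmetric])
  finally show ?thesis .
qed



definition dlt :: "(int \<Rightarrow> real) \<Rightarrow> int \<Rightarrow> real" where "dlt g a = g (a + 1) - g a"

lemma conv_up:
  assumes pos: "\<And>a. d \<le> a \<Longrightarrow> dlt g a \<ge> 0" and "d \<le> x" "x \<le> b"
  shows "g x \<le> g b"
proof -
  have "g x \<le> g (x + int n)" for n
  proof (induction n)
    case (Suc n)
    have "dlt g (x + int n) \<ge> 0" using pos assms(2) by simp
    hence "g (x + int n) \<le> g (x + int (Suc n))" by (simp add: dlt_def ac_simps)
    thus ?case using Suc by linarith
  qed simp
  from this[of "nat (b - x)"] show ?thesis using assms(3) by simp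
qed

lemma conv_down:
  assumes neg: "\<And>a. a < d \<Longrightarrow> dlt g a < 0" and "b < d"
  shows "g d < g b"
proof -
  have "g d < g (d - 1 - int n)" for n
  proof (induction n)
    case 0
    have "dlt g (d - 1) < 0" using neg by simp
    thus ?case by (simp add: dlt_def)
  next
    case (Suc n)
    have "dlt g (d - 1 - int (Suc n)) < 0" using neg by simp
    hence "g (d - 1 - int n) < g (d - 1 - int (Suc n))" by (simp add: dlt_def algebra_simps)
    thus ?case using Suc by simp
  qed
  from this[of "nat (d - 1 - b)"] show ?thesis using assms(2) by simp
qed

lemma conv_exists_min:
  assumes mono: "\<And>a b. a \<le> b \<Longrightarrow> dlt g a \<le> dlt g b"
    and neg: "dlt g a0 < 0" and pos: "dlt g a1 \<ge> 0"
  shows "\<exists>d. smallest_minimizer g d \<and> (\<forall>a. d \<le> a \<longrightarrow> dlt g a \<ge> 0) \<and> (\<forall>a. a < d \<longrightarrow> dlt g a < 0)"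
proof -
  have "a0 < a1" using mono[of a1 a0] neg pos by (cases "a1 \<le> a0") auto
  define P where "P n \<longleftrightarrow> dlt g (a0 + 1 + int n) \<ge> 0" for n
  have "P (nat (a1 - a0 - 1))" unfolding P_def using pos \<open>a0 < a1\<close> by simp
  define n0 where "n0 = (LEAST n. P n)"
  have Pn0: "P n0" unfolding n0_def by (rule LeastI) fact
  define d where "d = a0 + 1 + int n0"
  have up: "\<forall>a. d \<le> a \<longrightarrow> dlt g a \<ge> 0"
    using Pn0 mono unfolding P_def d_def by (meson order_trans)
  have down: "\<forall>a. a < d \<longrightarrow> dlt g a < 0"
  proof (intro allI impI)
    fix a assume "a < d"
    show "dlt g a < 0"
    proof (cases "a \<le> a0")
      case True thus ?thesis using mono[OF True] neg by simp
    next
      case False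
      define m where "m = nat (a - a0 - 1)"
      have a: "a = a0 + 1 + int m" using False unfolding m_def by simp
      have "m < n0" using \<open>a < d\<close> a unfolding d_def by simp
      hence "\<not> P m" unfolding n0_def using not_less_Least by blast
      thus ?thesis unfolding P_def a by simp
    qed
  qed
  have "smallest_minimizer g d"
    unfolding smallest_minimizer_def
  proof (intro conjI allI impI)
    fix b
    show "g d \<le> g b"
    proof (cases "d \<le> b")
      case True thus ?thesis using conv_up[of d g d b] up by simp
    next
      case False thus ?thesis using conv_down[of d g b] down by fastforce
    qed
  next
    fix b assume "b < d" thus "g d < g b" using conv_down[of d g b] down by simp
  qed
  thus ?thesis using up down by blast
qed

lemma sm_unique:
  assumes "smallest_minimizer g d" "smallest_minimizer g d'"
  shows "d = d'"
  using assms unfolding smallest_minimizer_def by (meson linorder_neqE_linordered_idom not_le)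

lemma sm_dlt:
  assumes "smallest_minimizer g d"
  shows "dlt g d \<ge> 0" "dlt g (d - 1) < 0"
  using assms unfolding smallest_minimizer_def dlt_def by (auto simp: algebra_simps)

lemma sm_mono:
  assumes "smallest_minimizer g d" "smallest_minimizer g' d'"
    and mono: "\<And>a b. a \<le> b \<Longrightarrow> dlt g a \<le> dlt g b"
    and le: "\<And>a. dlt g' a \<le> dlt g a"
  shows "d \<le> d'"
proof (rule ccontr)
  assume "\<not> d \<le> d'"
  hence "d' \<le> d - 1" by simp
  hence "dlt g d' \<le> dlt g (d - 1)" by (rule mono)
  moreover have "dlt g (d - 1) < 0" using sm_dlt(2)[OF assms(1)] .
  moreover have "dlt g' d' \<ge> 0" using sm_dlt(1)[OF assms(2)] .
  ultimately show False using le[of d'] by linarith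
qed

lemma sm_char:
  assumes "smallest_minimizer g d" and mono: "\<And>a b. a \<le> b \<Longrightarrow> dlt g a \<le> dlt g b"
  shows "\<And>a. d \<le> a \<Longrightarrow> dlt g a \<ge> 0" "\<And>a. a < d \<Longrightarrow> dlt g a < 0"
proof -
  fix a
  show "d \<le> a \<Longrightarrow> dlt g a \<ge> 0" using sm_dlt(1)[OF assms(1)] mono[of d a] by simp
  show "a < d \<Longrightarrow> dlt g a < 0" using sm_dlt(2)[OF assms(1)] mono[of a "d - 1"] by simp
qed

lemma min_above:
  assumes "smallest_minimizer g d" and mono: "\<And>a b. a \<le> b \<Longrightarrow> dlt g a \<le> dlt g b"
    and "x \<le> b"
  shows "g (max x d) \<le> g b"
proof (cases "x \<le> d")
  case True thus ?thesis using assms(1) unfolding smallest_minimizer_def by simp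
next
  case False
  thus ?thesis using conv_up[of d g x b] sm_char(1)[OF assms(1) mono] assms(3) by simp
qed



lemma nbf_step:
  assumes "0 \<le> r" "r \<le> r'" "0 < p" "p < 1" "nbf r p n \<le> nbf r' p n"
  shows "nbf r p (Suc n) \<le> nbf r' p (Suc n)"
proof -
  have b0: "0 \<le> (real n + r) / (real n + 1) * (1 - p)" using assms by simp
  have bb: "(real n + r) / (real n + 1) * (1 - p) \<le> (real n + r') / (real n + 1) * (1 - p)"
    using assms by (intro mult_right_mono divide_right_mono) auto
  have "nbf r p n * ((real n + r) / (real n + 1) * (1 - p)) \<le> nbf r' p n * ((real n + r) / (real n + 1) * (1 - p))"
    by (rule mult_right_mono[OF assms(5) b0])
  also have "\<dots> \<le> nbf r' p n * ((real n + r') / (real n + 1) * (1 - p))"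
    by (rule mult_left_mono[OF bb]) (use nbf_nonneg[of r' p n] assms in auto)
  finally show ?thesis by (simp add: nbf_Suc)
qed

lemma nice_mean_val:
  assumes "r \<ge> 0" "0 < p" "p < 1"
  shows "infsum (\<lambda>n. nbf r p n * real n) UNIV = r * (1-p) / p"
  by (rule infsumI, rule sums_nonneg_imp_has_sum[OF nbf_mean[OF assms]]) (simp add: nbf_nonneg[OF assms])

lemma pair_lin_value:
  assumes f: "nice f" and g: "nice g" and ABC: "A \<ge> 0" "B \<ge> 0" "C \<ge> 0"
  shows "((\<lambda>(z,j). f z * g j * (A + B * real z + C * real j)) has_sum
           (A + B * infsum (\<lambda>n. f n * real n) UNIV + C * infsum (\<lambda>n. g n * real n) UNIV)) UNIV"
proof -
  define Mf where "Mf = infsum (\<lambda>n. f n * real n) UNIV"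
  define Mg where "Mg = infsum (\<lambda>j. g j * real j) UNIV"
  define W where "W = (\<lambda>(z,j). f z * g j * (A + B * real z + C * real j))"
  have inner: "((\<lambda>j. W (z, j)) has_sum (f z * (A + B * real z) * 1 + f z * C * Mg)) UNIV" for z
  proof -
    have "((\<lambda>j. f z * (A + B * real z) * g j + f z * C * (g j * real j)) has_sum
            (f z * (A + B * real z) * 1 + f z * C * Mg)) UNIV"
      unfolding Mg_def by (intro has_sum_add has_sum_cmult_right nice_sum g has_sum_infsum nice_mean)
    moreover have "(\<lambda>j. f z * (A + B * real z) * g j + f z * C * (g j * real j)) = (\<lambda>j. W (z, j))"
      by (auto simp: W_def algebra_simps)
    ultimately show ?thesis by simp
  qed
  have outer: "((\<lambda>z. f z * (A + B * real z) * 1 + f z * C * Mg) has_sum ((A + C * Mg) * 1 + B * Mf)) UNIV"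
  proof -
    have "((\<lambda>z. (A + C * Mg) * f z + B * (f z * real z)) has_sum ((A + C * Mg) * 1 + B * Mf)) UNIV"
      unfolding Mf_def by (intro has_sum_add has_sum_cmult_right nice_sum has_sum_infsum nice_mean f)
    moreover have "(\<lambda>z. (A + C * Mg) * f z + B * (f z * real z)) = (\<lambda>z. f z * (A + B * real z) * 1 + f z * C * Mg)"
      by (auto simp: algebra_simps)
    ultimately show ?thesis by simp
  qed
  have "W summable_on UNIV"
    unfolding W_def by (rule pair_lin_summable[OF f g _ ABC]) (use ABC in \<open>auto simp: abs_of_nonneg\<close>)
  hence "(W has_sum ((A + C * Mg) * 1 + B * Mf)) (Sigma UNIV (\<lambda>_. UNIV))"
    by (intro has_sum_SigmaI[OF inner outer]) simp
  thus ?thesis unfolding W_def Mf_def Mg_def by (simp add: algebra_simps)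
qed

locale sp =
  fixes cv ch cb alpha0 beta0 :: real and N T :: nat
  assumes cv: "cv > 0" and ch: "ch > 0" and cb: "cb > cv" and a0: "alpha0 > 0" and b0: "beta0 > 0"
    and N: "N \<ge> 1"
begin

definition pp :: "nat \<Rightarrow> real" where "pp t = p_ep beta0 N t"
definition fz :: "nat \<Rightarrow> nat \<Rightarrow> nat \<Rightarrow> real" where "fz t k = nb_pmf (alpha0 + real k) (pp t)"
definition fk :: "nat \<Rightarrow> nat \<Rightarrow> nat \<Rightarrow> real" where "fk t k = nb_pmf ((real N - 1) * (alpha0 + real k)) (pp t)"

lemma spos: "beta0 + real N * real t > 0" using b0 by (simp add: add_pos_nonneg)

lemma pp: "0 < pp t" "pp t < 1"
proof -
  have s: "beta0 + real N * real t > 0" by (rule spos)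
  show "0 < pp t" unfolding pp_def p_ep_def using s by simp
  show "pp t < 1" unfolding pp_def p_ep_def using s by simp
qed

lemma qp: "(1 - pp t) / pp t \<le> 1 / beta0"
proof -
  define s where "s = beta0 + real N * real t"
  have s: "s > 0" unfolding s_def by (rule spos)
  have "1 - s / (s + 1) = 1 / (s + 1)" using s by (simp add: field_simps)
  hence "(1 - pp t) / pp t = 1 / s"
    using s unfolding pp_def p_ep_def s_def[symmetric] by (simp add: field_simps)
  also have "\<dots> = 1 / (beta0 + real N * real t)" unfolding s_def ..
  also have "\<dots> \<le> 1 / beta0" using b0 spos[of t] by (intro divide_left_mono) auto
  finally show ?thesis .
qed

lemma rz: "alpha0 + real k \<ge> 0" using a0 by simp
lemma rk: "(real N - 1) * (alpha0 + real k) \<ge> 0" using a0 N by simp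

lemma fz_nbf: "fz t k = nbf (alpha0 + real k) (pp t)"
  using nb_eq[OF rz pp(1)] unfolding fz_def by auto
lemma fk_nbf: "fk t k = nbf ((real N - 1) * (alpha0 + real k)) (pp t)"
  using nb_eq[OF rk pp(1)] unfolding fk_def by auto

lemma nice_fz: "nice (fz t k)" unfolding fz_nbf by (rule nice_nbf[OF rz pp])
lemma nice_fk: "nice (fk t k)" unfolding fk_nbf by (rule nice_nbf[OF rk pp])

lemma step_fz: "k \<le> k' \<Longrightarrow> fz t k n \<le> fz t k' n \<Longrightarrow> fz t k (Suc n) \<le> fz t k' (Suc n)"
  unfolding fz_nbf by (rule nbf_step[OF rz _ pp]) auto
lemma step_fk: "k \<le> k' \<Longrightarrow> fk t k n \<le> fk t k' n \<Longrightarrow> fk t k (Suc n) \<le> fk t k' (Suc n)"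
  unfolding fk_nbf using N by (intro nbf_step[OF rk _ pp]) (auto intro!: mult_left_mono)

definition c0 :: real where "c0 = real N * (1 + alpha0) * (1 + 1 / beta0)"

lemma c0_pos: "c0 \<ge> 1" 
proof -
  have "1 \<le> 1 + alpha0" "1 \<le> 1 + 1 / beta0" using a0 b0 by auto
  hence "1 * 1 \<le> (1 + alpha0) * (1 + 1 / beta0)" by (intro mult_mono) auto
  also have "\<dots> = 1 * \<dots>" by simp
  also have "\<dots> \<le> real N * ((1 + alpha0) * (1 + 1 / beta0))"
    using N a0 b0 by (intro mult_right_mono) auto
  finally show ?thesis unfolding c0_def by (simp add: mult.assoc)
qed

lemma mean_bound:
  assumes "r \<ge> 0" "r \<le> real N * (alpha0 + real k)"
  shows "infsum (\<lambda>n. nbf r (pp t) n * real n) UNIV \<le> c0 * (1 + real k)"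
proof -
  have "infsum (\<lambda>n. nbf r (pp t) n * real n) UNIV = r * ((1 - pp t) / pp t)"
    using nice_mean_val[OF assms(1) pp] by simp
  also have "\<dots> \<le> (real N * (alpha0 + real k)) * (1 / beta0)"
    using qp[of t] assms pp[of t] by (intro mult_mono) auto
  also have "\<dots> \<le> c0 * (1 + real k)"
  proof -
    have "alpha0 + real k \<le> (1 + alpha0) * (1 + real k)" using a0 by (simp add: algebra_simps)
    moreover have "1 / beta0 \<le> 1 + 1 / beta0" by simp
    ultimately have "(alpha0 + real k) * (1 / beta0) \<le> ((1 + alpha0) * (1 + real k)) * (1 + 1 / beta0)"
      using a0 b0 by (intro mult_mono) auto
    hence "real N * ((alpha0 + real k) * (1 / beta0)) \<le> real N * (((1 + alpha0) * (1 + real k)) * (1 + 1 / beta0))"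
      by (rule mult_left_mono) simp
    thus ?thesis unfolding c0_def by (simp add: ac_simps)
  qed
  finally show ?thesis .
qed

lemma mean_fz: "infsum (\<lambda>n. fz t k n * real n) UNIV \<le> c0 * (1 + real k)"
  unfolding fz_nbf using N rz[of k] mult_right_mono[of 1 "real N" "alpha0 + real k"] by (intro mean_bound rz) auto
lemma mean_fk: "infsum (\<lambda>n. fk t k n * real n) UNIV \<le> c0 * (1 + real k)"
  unfolding fk_nbf using N rz[of k] mult_right_mono[of "real N - 1" "real N" "alpha0 + real k"] by (intro mean_bound rk) auto

lemma mean_nonneg: "nice w \<Longrightarrow> infsum (\<lambda>n. w n * real n) UNIV \<ge> 0"
  by (rule infsum_nonneg) (simp add: nice_nonneg)

end


context sp begin

definition dV :: "(int \<Rightarrow> nat \<Rightarrow> real) \<Rightarrow> int \<Rightarrow> nat \<Rightarrow> real" where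
  "dV V x k = V (x + 1) k - V x k"

definition inv :: "(int \<Rightarrow> nat \<Rightarrow> real) \<Rightarrow> bool" where
  "inv V \<longleftrightarrow> (\<forall>x k. 0 \<le> V x k) \<and> (\<exists>M\<ge>0. \<forall>x k. V x k \<le> M * (1 + \<bar>real_of_int x\<bar> + real k))
     \<and> (\<forall>x k. -cv \<le> dV V x k) \<and> (\<forall>x y k. x \<le> y \<longrightarrow> dV V x k \<le> dV V y k)
     \<and> (\<forall>x k k'. k \<le> k' \<longrightarrow> dV V x k' \<le> dV V x k) \<and> (\<forall>k. \<exists>x. dV V x k \<le> 0)"

definition EN :: "nat \<Rightarrow> (int \<Rightarrow> nat \<Rightarrow> real) \<Rightarrow> int \<Rightarrow> nat \<Rightarrow> real" where
  "EN t V a k = infsum (\<lambda>(z,j). fz t k z * fk t k j * V (a - int z) (k + z + j)) UNIV"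

lemma EN_eq: "E_next alpha0 beta0 N t V a k = EN t V a k"
  unfolding E_next_def EN_def fz_def fk_def pp_def ..

definition EH :: "nat \<Rightarrow> int \<Rightarrow> nat \<Rightarrow> real" where
  "EH t a k = infsum (\<lambda>n. fz t k n * max (real_of_int a - real n) 0) UNIV"
definition EB :: "nat \<Rightarrow> int \<Rightarrow> nat \<Rightarrow> real" where
  "EB t a k = infsum (\<lambda>n. fz t k n * max (real n - real_of_int a) 0) UNIV"

lemma EH_eq: "E_hold alpha0 beta0 N t a k = EH t a k"
  unfolding E_hold_def EH_def fz_def pp_def ..
lemma EB_eq: "E_back alpha0 beta0 N t a k = EB t a k"
  unfolding E_back_def EB_def fz_def pp_def ..

definition Gg :: "nat \<Rightarrow> (int \<Rightarrow> nat \<Rightarrow> real) \<Rightarrow> int \<Rightarrow> nat \<Rightarrow> real" where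
  "Gg t V a k = cv * real_of_int a + ch * EH t a k + cb * EB t a k + EN t V a k"

definition F :: "nat \<Rightarrow> nat \<Rightarrow> int \<Rightarrow> real" where
  "F t k a = infsum (\<lambda>n. fz t k n * (if int n \<le> a then 1 else 0)) UNIV"

definition ED :: "nat \<Rightarrow> (int \<Rightarrow> nat \<Rightarrow> real) \<Rightarrow> int \<Rightarrow> nat \<Rightarrow> real" where
  "ED t V a k = infsum (\<lambda>(z,j). fz t k z * fk t k j * dV V (a - int z) (k + z + j)) UNIV"

lemma pair_const:
  assumes f: "nice f" and g: "nice g"
  shows "((\<lambda>(z,j). f z * g j * c) has_sum c) UNIV"
proof -
  have "((\<lambda>x. c * (\<lambda>(z,j). f z * g j * (1 + 0 * real z + 0 * real j)) x) has_sum (c * (1 + 0 * infsum (\<lambda>n. f n * real n) UNIV + 0 * infsum (\<lambda>n. g n * real n) UNIV))) UNIV"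
    by (rule has_sum_cmult_right, rule pair_lin_value[OF f g]) auto
  moreover have "(\<lambda>x. c * (\<lambda>(z,j). f z * g j * (1 + 0 * real z + 0 * real j)) x) = (\<lambda>(z,j). f z * g j * c)"
    by (auto simp: fun_eq_iff)
  ultimately show ?thesis by simp
qed

lemma ind_bdd: "\<bar>(if int n \<le> a then 1 else 0 :: real)\<bar> \<le> 1" by simp

lemma sumEH: "(\<lambda>n. fz t k n * max (real_of_int a - real n) 0) summable_on UNIV"
  by (rule nice_lin_summable[OF nice_fz, of _ "\<bar>real_of_int a\<bar>" 1]) auto
lemma sumEB: "(\<lambda>n. fz t k n * max (real n - real_of_int a) 0) summable_on UNIV"
  by (rule nice_lin_summable[OF nice_fz, of _ "\<bar>real_of_int a\<bar>" 1]) auto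
lemma sumF: "(\<lambda>n. fz t k n * (if int n \<le> a then 1 else 0)) summable_on UNIV"
  by (rule nice_bdd_summable[OF nice_fz ind_bdd])

lemma max_diff1: "max (real_of_int (a+1) - real n) 0 - max (real_of_int a - real n) 0 = (if int n \<le> a then 1 else 0)"
proof (cases "int n \<le> a")
  case True
  hence "real n \<le> real_of_int a" by (metis of_int_of_nat_eq of_int_le_iff)
  thus ?thesis using True by simp
next
  case False
  hence "a + 1 \<le> int n" by simp
  hence "real_of_int a + 1 \<le> real n" by (metis of_int_of_nat_eq of_int_le_iff of_int_add of_int_1)
  thus ?thesis using False by simp
qed

lemma max_diff2: "max (real n - real_of_int (a+1)) 0 - max (real n - real_of_int a) 0 = (if int n \<le> a then 1 else 0) - 1"
proof (cases "int n \<le> a")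
  case True
  hence "real n \<le> real_of_int a" by (metis of_int_of_nat_eq of_int_le_iff)
  thus ?thesis using True by simp
next
  case False
  hence "a + 1 \<le> int n" by simp
  hence "real_of_int a + 1 \<le> real n" by (metis of_int_of_nat_eq of_int_le_iff of_int_add of_int_1)
  thus ?thesis using False by simp
qed

lemma dEH: "EH t (a + 1) k - EH t a k = F t k a"
proof -
  have "EH t (a + 1) k - EH t a k =
      infsum (\<lambda>n. fz t k n * max (real_of_int (a + 1) - real n) 0 - fz t k n * max (real_of_int a - real n) 0) UNIV"
    unfolding EH_def by (rule infsum_diff_r[symmetric]) (rule sumEH)+
  also have "\<dots> = F t k a" unfolding F_def
    by (rule infsum_cong) (simp add: max_diff1 flip: right_diff_distrib)
  finally show ?thesis .
qed

lemma dEB: "EB t (a + 1) k - EB t a k = F t k a - 1"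
proof -
  have "EB t (a + 1) k - EB t a k =
      infsum (\<lambda>n. fz t k n * max (real n - real_of_int (a + 1)) 0 - fz t k n * max (real n - real_of_int a) 0) UNIV"
    unfolding EB_def by (rule infsum_diff_r[symmetric]) (rule sumEB)+
  also have "\<dots> = infsum (\<lambda>n. fz t k n * (if int n \<le> a then 1 else 0) - fz t k n) UNIV"
    by (rule infsum_cong) (simp add: max_diff2 algebra_simps flip: right_diff_distrib)
  also have "\<dots> = F t k a - 1" unfolding F_def
    by (subst infsum_diff_r) (auto intro: sumF nice_summable nice_fz simp: nice_infsum[OF nice_fz])
  finally show ?thesis .
qed

lemma F_nonneg: "0 \<le> F t k a"
  unfolding F_def by (rule infsum_nonneg) (simp add: nice_nonneg[OF nice_fz])

lemma F_le1: "F t k a \<le> 1"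
proof -
  have "F t k a \<le> infsum (fz t k) UNIV" unfolding F_def
    by (rule infsum_mono[OF sumF nice_summable[OF nice_fz]]) (simp add: nice_nonneg[OF nice_fz])
  thus ?thesis by (simp add: nice_infsum[OF nice_fz])
qed

lemma F_mono: "a \<le> b \<Longrightarrow> F t k a \<le> F t k b"
  unfolding F_def by (rule infsum_mono[OF sumF sumF]) (auto simp: nice_nonneg[OF nice_fz])

lemma F_anti: "k \<le> k' \<Longrightarrow> F t k' a \<le> F t k a"
  unfolding F_def
  by (rule mlr_single[OF nice_fz nice_fz _ _ ind_bdd]) (auto intro: step_fz)

lemma F_neg: "a < 0 \<Longrightarrow> F t k a = 0"
  unfolding F_def by (rule infsum_0) simp

lemma F_large: "c < 1 \<Longrightarrow> \<exists>a. c < F t k a"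
proof -
  assume c: "c < 1"
  have "fz t k sums 1" using nice_sum[OF nice_fz] by (rule has_sum_imp_sums)
  hence "(\<lambda>n. sum (fz t k) {..<n}) \<longlonglongrightarrow> 1" by (simp add: sums_def)
  hence "eventually (\<lambda>n. c < sum (fz t k) {..<n}) sequentially" using c by (rule order_tendstoD)
  then obtain n where n: "c < sum (fz t k) {..<n}" by (meson eventually_sequentially order.refl)
  have "F t k (int n) = infsum (fz t k) {..<n + 1}" unfolding F_def
    by (rule infsum_cong_neutral) auto
  also have "\<dots> \<ge> sum (fz t k) {..<n}"
    by (simp add: nice_nonneg[OF nice_fz])
  finally have "c < F t k (int n)" using n by linarith
  thus ?thesis by blast
qed

lemma inv_M: "inv V \<Longrightarrow> \<exists>M\<ge>0. \<forall>x k. V x k \<le> M * (1 + \<bar>real_of_int x\<bar> + real k)"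
  by (simp add: inv_def)
lemma inv_nonneg: "inv V \<Longrightarrow> 0 \<le> V x k" by (simp add: inv_def)
lemma inv_lb: "inv V \<Longrightarrow> -cv \<le> dV V x k" by (simp add: inv_def)
lemma inv_mono: "inv V \<Longrightarrow> x \<le> y \<Longrightarrow> dV V x k \<le> dV V y k" by (simp add: inv_def)
lemma inv_anti: "inv V \<Longrightarrow> k \<le> k' \<Longrightarrow> dV V x k' \<le> dV V x k" by (simp add: inv_def)
lemma inv_ex: "inv V \<Longrightarrow> \<exists>x. dV V x k \<le> 0" by (simp add: inv_def)

lemma inv_ub: "inv V \<Longrightarrow> dV V (a - int z) (k + z + j) \<le> dV V a k"
  using inv_mono[of V "a - int z" a "k + z + j"] inv_anti[of V k "k + z + j" a] by simp

lemma inv_bdd: "inv V \<Longrightarrow> \<bar>dV V (a - int z) (k + z + j)\<bar> \<le> cv + \<bar>dV V a k\<bar>"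
  using inv_ub[of V a z k j] inv_lb[of V "a - int z" "k + z + j"] cv by linarith

lemma sumEN:
  assumes "inv V"
  shows "(\<lambda>(z,j). fz t k z * fk t k j * V (a - int z) (k + z + j)) summable_on UNIV"
proof -
  obtain M where M: "M \<ge> 0" "\<And>x k. V x k \<le> M * (1 + \<bar>real_of_int x\<bar> + real k)"
    using inv_M[OF assms] by blast
  show ?thesis
  proof (rule pair_lin_summable[OF nice_fz nice_fk, of _ "M * (1 + \<bar>real_of_int a\<bar> + real k)" "2 * M" M])
    fix z j
    have "\<bar>V (a - int z) (k + z + j)\<bar> = V (a - int z) (k + z + j)" using inv_nonneg[OF assms] by simp
    also have "\<dots> \<le> M * (1 + \<bar>real_of_int (a - int z)\<bar> + real (k + z + j))" by (rule M)
    also have "\<dots> \<le> M * (1 + (\<bar>real_of_int a\<bar> + real z) + real (k + z + j))"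
      by (intro mult_left_mono M) auto
    finally show "\<bar>V (a - int z) (k + z + j)\<bar> \<le> M * (1 + \<bar>real_of_int a\<bar> + real k) + 2 * M * real z + M * real j"
      by (simp add: algebra_simps)
  qed (use M in auto)
qed

lemma sumED:
  assumes "inv V"
  shows "(\<lambda>(z,j). fz t k' z * fk t k' j * dV V (a - int z) (k + z + j)) summable_on UNIV"
  by (rule pair_lin_summable[OF nice_fz nice_fk, of _ "cv + \<bar>dV V a k\<bar>" 0 0]) (use inv_bdd[OF assms] cv in auto)

lemma dEN:
  assumes "inv V"
  shows "EN t V (a + 1) k - EN t V a k = ED t V a k"
proof -
  have "EN t V (a + 1) k - EN t V a k = infsum (\<lambda>x. (\<lambda>(z,j). fz t k z * fk t k j * V (a + 1 - int z) (k + z + j)) x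
       - (\<lambda>(z,j). fz t k z * fk t k j * V (a - int z) (k + z + j)) x) UNIV"
    unfolding EN_def by (rule infsum_diff_r[symmetric]) (rule sumEN[OF assms])+
  also have "\<dots> = ED t V a k" unfolding ED_def
    by (rule infsum_cong) (auto simp: dV_def algebra_simps)
  finally show ?thesis .
qed

lemma ED_lb: "inv V \<Longrightarrow> -cv \<le> ED t V a k"
proof -
  assume V: "inv V"
  have "infsum (\<lambda>(z,j). fz t k z * fk t k j * (-cv)) UNIV \<le> ED t V a k" unfolding ED_def
  proof (rule infsum_mono)
    show "(\<lambda>(z,j). fz t k z * fk t k j * (-cv)) summable_on UNIV"
      by (rule pair_lin_summable[OF nice_fz nice_fk, of _ cv 0 0]) (use cv in auto)
    show "(\<lambda>(z,j). fz t k z * fk t k j * dV V (a - int z) (k + z + j)) summable_on UNIV" by (rule sumED[OF V])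
    fix x :: "nat \<times> nat" obtain z j where x: "x = (z,j)" by (cases x)
    show "(\<lambda>(z,j). fz t k z * fk t k j * (-cv)) x \<le> (\<lambda>(z,j). fz t k z * fk t k j * dV V (a - int z) (k + z + j)) x"
      unfolding x prod.case
      by (rule mult_left_mono[OF _ mult_nonneg_nonneg[OF nice_nonneg[OF nice_fz] nice_nonneg[OF nice_fk]]])
         (rule inv_lb[OF V])
  qed
  moreover have "infsum (\<lambda>(z,j). fz t k z * fk t k j * (-cv)) UNIV = -cv"
    by (rule infsumI, rule pair_const[OF nice_fz nice_fk])
  ultimately show ?thesis by simp
qed

end


context sp begin

lemma ED_ub: "inv V \<Longrightarrow> ED t V a k \<le> dV V a k"
proof -
  assume V: "inv V"
  have "ED t V a k \<le> infsum (\<lambda>(z,j). fz t k z * fk t k j * dV V a k) UNIV" unfolding ED_def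
  proof (rule infsum_mono)
    show "(\<lambda>(z,j). fz t k z * fk t k j * dV V a k) summable_on UNIV"
      by (rule pair_lin_summable[OF nice_fz nice_fk, of _ "\<bar>dV V a k\<bar>" 0 0]) auto
    show "(\<lambda>(z,j). fz t k z * fk t k j * dV V (a - int z) (k + z + j)) summable_on UNIV" by (rule sumED[OF V])
    fix x :: "nat \<times> nat" obtain z j where x: "x = (z,j)" by (cases x)
    show "(\<lambda>(z,j). fz t k z * fk t k j * dV V (a - int z) (k + z + j)) x \<le> (\<lambda>(z,j). fz t k z * fk t k j * dV V a k) x"
      unfolding x prod.case
      by (rule mult_left_mono[OF _ mult_nonneg_nonneg[OF nice_nonneg[OF nice_fz] nice_nonneg[OF nice_fk]]])
         (rule inv_ub[OF V])
  qed
  also have "\<dots> = dV V a k" by (rule infsumI, rule pair_const[OF nice_fz nice_fk])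
  finally show ?thesis .
qed

lemma ED_mono: "inv V \<Longrightarrow> a \<le> b \<Longrightarrow> ED t V a k \<le> ED t V b k"
proof -
  assume V: "inv V" and ab: "a \<le> b"
  show ?thesis unfolding ED_def
  proof (rule infsum_mono)
    show "(\<lambda>(z,j). fz t k z * fk t k j * dV V (a - int z) (k + z + j)) summable_on UNIV" by (rule sumED[OF V])
    show "(\<lambda>(z,j). fz t k z * fk t k j * dV V (b - int z) (k + z + j)) summable_on UNIV" by (rule sumED[OF V])
    fix x :: "nat \<times> nat" obtain z j where x: "x = (z,j)" by (cases x)
    show "(\<lambda>(z,j). fz t k z * fk t k j * dV V (a - int z) (k + z + j)) x \<le> (\<lambda>(z,j). fz t k z * fk t k j * dV V (b - int z) (k + z + j)) x"
      unfolding x prod.case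
      by (rule mult_left_mono[OF _ mult_nonneg_nonneg[OF nice_nonneg[OF nice_fz] nice_nonneg[OF nice_fk]]])
         (rule inv_mono[OF V], use ab in simp)
  qed
qed

lemma ED_anti: "inv V \<Longrightarrow> k \<le> k' \<Longrightarrow> ED t V a k' \<le> ED t V a k"
proof -
  assume V: "inv V" and kk: "k \<le> k'"
  have "ED t V a k' \<le> infsum (\<lambda>(z,j). fz t k' z * fk t k' j * dV V (a - int z) (k + z + j)) UNIV"
    unfolding ED_def
  proof (rule infsum_mono)
    show "(\<lambda>(z,j). fz t k' z * fk t k' j * dV V (a - int z) (k' + z + j)) summable_on UNIV" by (rule sumED[OF V])
    show "(\<lambda>(z,j). fz t k' z * fk t k' j * dV V (a - int z) (k + z + j)) summable_on UNIV" by (rule sumED[OF V])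
    fix x :: "nat \<times> nat" obtain z j where x: "x = (z,j)" by (cases x)
    show "(\<lambda>(z,j). fz t k' z * fk t k' j * dV V (a - int z) (k' + z + j)) x \<le> (\<lambda>(z,j). fz t k' z * fk t k' j * dV V (a - int z) (k + z + j)) x"
      unfolding x prod.case
      by (rule mult_left_mono[OF _ mult_nonneg_nonneg[OF nice_nonneg[OF nice_fz] nice_nonneg[OF nice_fk]]])
         (rule inv_anti[OF V], use kk in simp)
  qed
  also have "\<dots> \<le> ED t V a k" unfolding ED_def
  proof (rule mlr_pair[OF nice_fz nice_fz nice_fk nice_fk, where H="\<lambda>z j. dV V (a - int z) (k + z + j)"])
    show "\<And>n. fz t k n \<le> fz t k' n \<Longrightarrow> fz t k (Suc n) \<le> fz t k' (Suc n)" by (rule step_fz[OF kk])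
    show "\<And>n. fk t k n \<le> fk t k' n \<Longrightarrow> fk t k (Suc n) \<le> fk t k' (Suc n)" by (rule step_fk[OF kk])
    show "\<And>z z' j. z \<le> z' \<Longrightarrow> dV V (a - int z') (k + z' + j) \<le> dV V (a - int z) (k + z + j)"
      using inv_mono[OF V] inv_anti[OF V] by (meson add_le_mono1 diff_left_mono of_nat_le_iff order_trans add_le_cancel_left)
    show "\<And>z j j'. j \<le> j' \<Longrightarrow> dV V (a - int z) (k + z + j') \<le> dV V (a - int z) (k + z + j)"
      using inv_anti[OF V] by simp
    show "\<And>z j. \<bar>dV V (a - int z) (k + z + j)\<bar> \<le> cv + \<bar>dV V a k\<bar>" by (rule inv_bdd[OF V])
  qed
  finally show ?thesis .
qed

lemma dG: "inv V \<Longrightarrow> dlt (\<lambda>a. Gg t V a k) a = cv + ch * F t k a + cb * (F t k a - 1) + ED t V a k"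
proof -
  assume V: "inv V"
  have "dlt (\<lambda>a. Gg t V a k) a = cv * (real_of_int (a+1) - real_of_int a) + ch * (EH t (a+1) k - EH t a k)
      + cb * (EB t (a+1) k - EB t a k) + (EN t V (a+1) k - EN t V a k)"
    unfolding dlt_def Gg_def by (simp add: algebra_simps)
  thus ?thesis using dEH dEB dEN[OF V] by simp
qed

lemma G_mono: "inv V \<Longrightarrow> a \<le> b \<Longrightarrow> dlt (\<lambda>a. Gg t V a k) a \<le> dlt (\<lambda>a. Gg t V a k) b"
proof -
  assume V: "inv V" and ab: "a \<le> b"
  have "F t k a \<le> F t k b" by (rule F_mono[OF ab])
  hence "ch * F t k a + cb * (F t k a - 1) \<le> ch * F t k b + cb * (F t k b - 1)"
    using ch cv cb by (intro add_mono mult_left_mono) auto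
  thus ?thesis using dG[OF V, of t k a] dG[OF V, of t k b] ED_mono[OF V ab, of t k] by linarith
qed

lemma G_anti: "inv V \<Longrightarrow> k \<le> k' \<Longrightarrow> dlt (\<lambda>a. Gg t V a k') a \<le> dlt (\<lambda>a. Gg t V a k) a"
proof -
  assume V: "inv V" and kk: "k \<le> k'"
  have "F t k' a \<le> F t k a" by (rule F_anti[OF kk])
  hence "ch * F t k' a + cb * (F t k' a - 1) \<le> ch * F t k a + cb * (F t k a - 1)"
    using ch cv cb by (intro add_mono mult_left_mono) auto
  thus ?thesis using dG[OF V, of t k a] dG[OF V, of t k' a] ED_anti[OF V kk, of t a] by linarith
qed

lemma G_neg: "inv V \<Longrightarrow> \<exists>a. dlt (\<lambda>a. Gg t V a k) a < 0"
proof -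
  assume V: "inv V"
  obtain x where x: "dV V x k \<le> 0" using inv_ex[OF V] by blast
  define a where "a = min (-1) x"
  have "F t k a = 0" by (rule F_neg) (simp add: a_def)
  moreover have "ED t V a k \<le> 0"
    using ED_ub[OF V, of t a k] inv_mono[OF V, of a x k] x unfolding a_def by simp
  ultimately have "dlt (\<lambda>a. Gg t V a k) a \<le> cv - cb" using dG[OF V] by simp
  hence "dlt (\<lambda>a. Gg t V a k) a < 0" using cb by linarith
  thus ?thesis by blast
qed

lemma G_pos: "inv V \<Longrightarrow> \<exists>a. dlt (\<lambda>a. Gg t V a k) a \<ge> 0"
proof -
  assume V: "inv V"
  have "cb / (ch + cb) < 1" using ch cb cv by simp
  then obtain a where a: "cb / (ch + cb) < F t k a" using F_large by blast
  hence "cb < (ch + cb) * F t k a" using ch cb cv by (simp add: field_simps)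
  moreover have "-cv \<le> ED t V a k" by (rule ED_lb[OF V])
  ultimately have "0 \<le> cv + ch * F t k a + cb * (F t k a - 1) + ED t V a k" by (simp add: algebra_simps)
  thus ?thesis using dG[OF V] by metis
qed

end


context sp begin

lemma EH_nonneg: "0 \<le> EH t a k"
  unfolding EH_def by (rule infsum_nonneg) (simp add: nice_nonneg[OF nice_fz])
lemma EB_nonneg: "0 \<le> EB t a k"
  unfolding EB_def by (rule infsum_nonneg) (simp add: nice_nonneg[OF nice_fz])
lemma w_nonneg: "0 \<le> c \<Longrightarrow> 0 \<le> fz t k z * fk t k j * c"
  by (intro mult_nonneg_nonneg nice_nonneg[OF nice_fz] nice_nonneg[OF nice_fk])

lemma EN_nonneg: "inv V \<Longrightarrow> 0 \<le> EN t V a k"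
  unfolding EN_def by (rule infsum_nonneg) (auto intro!: w_nonneg simp: inv_nonneg)

lemma lin_val: "((\<lambda>n. fz t k n * (A + real n)) has_sum (A + infsum (\<lambda>n. fz t k n * real n) UNIV)) UNIV"
proof -
  have "((\<lambda>n. A * fz t k n + fz t k n * real n) has_sum (A * 1 + infsum (\<lambda>n. fz t k n * real n) UNIV)) UNIV"
    by (intro has_sum_add has_sum_cmult_right nice_sum nice_fz has_sum_infsum nice_mean)
  thus ?thesis by (simp add: algebra_simps)
qed

lemma EH_ub: "EH t a k \<le> \<bar>real_of_int a\<bar> + c0 * (1 + real k)"
proof -
  have "EH t a k \<le> \<bar>real_of_int a\<bar> + infsum (\<lambda>n. fz t k n * real n) UNIV" unfolding EH_def
    by (rule has_sum_mono[OF has_sum_infsum[OF sumEH] lin_val])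
       (auto intro!: mult_left_mono nice_nonneg[OF nice_fz])
  thus ?thesis using mean_fz[of t k] by linarith
qed

lemma EB_ub: "EB t a k \<le> \<bar>real_of_int a\<bar> + c0 * (1 + real k)"
proof -
  have "EB t a k \<le> \<bar>real_of_int a\<bar> + infsum (\<lambda>n. fz t k n * real n) UNIV" unfolding EB_def
    by (rule has_sum_mono[OF has_sum_infsum[OF sumEB] lin_val])
       (auto intro!: mult_left_mono nice_nonneg[OF nice_fz])
  thus ?thesis using mean_fz[of t k] by linarith
qed

lemma EN_ub:
  assumes V: "inv V" and M: "M \<ge> 0" "\<And>x k. V x k \<le> M * (1 + \<bar>real_of_int x\<bar> + real k)"
  shows "EN t V a k \<le> M * (1 + \<bar>real_of_int a\<bar> + real k) + 3 * M * c0 * (1 + real k)"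
proof -
  have "EN t V a k \<le> M * (1 + \<bar>real_of_int a\<bar> + real k) + 2 * M * infsum (\<lambda>n. fz t k n * real n) UNIV
        + M * infsum (\<lambda>n. fk t k n * real n) UNIV" unfolding EN_def
  proof (rule has_sum_mono[OF has_sum_infsum[OF sumEN[OF V]] pair_lin_value[OF nice_fz nice_fk]])
    fix x :: "nat \<times> nat" obtain z j where x: "x = (z,j)" by (cases x)
    have "V (a - int z) (k + z + j) \<le> M * (1 + \<bar>real_of_int (a - int z)\<bar> + real (k + z + j))" by (rule M)
    also have "\<dots> \<le> M * (1 + (\<bar>real_of_int a\<bar> + real z) + real (k + z + j))"
      by (intro mult_left_mono M) auto
    also have "\<dots> = M * (1 + \<bar>real_of_int a\<bar> + real k) + 2 * M * real z + M * real j" by (simp add: algebra_simps)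
    finally show "(\<lambda>(z,j). fz t k z * fk t k j * V (a - int z) (k + z + j)) x \<le>
       (\<lambda>(z,j). fz t k z * fk t k j * (M * (1 + \<bar>real_of_int a\<bar> + real k) + 2 * M * real z + M * real j)) x"
      unfolding x prod.case
      by (rule mult_left_mono[OF _ mult_nonneg_nonneg[OF nice_nonneg[OF nice_fz] nice_nonneg[OF nice_fk]]])
  qed (use M in auto)
  also have "\<dots> \<le> M * (1 + \<bar>real_of_int a\<bar> + real k) + 2 * M * (c0 * (1 + real k)) + M * (c0 * (1 + real k))"
    using M mean_fz[of t k] mean_fk[of t k] by (intro add_mono mult_left_mono) auto
  finally show ?thesis by (simp add: algebra_simps)
qed

lemma Q_bounds:
  assumes V: "inv V"
  shows "\<exists>K\<ge>0. \<forall>a k. 0 \<le> Gg t V a k - cv * real_of_int a \<and> Gg t V a k - cv * real_of_int a \<le> K * (1 + \<bar>real_of_int a\<bar> + real k)"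
proof -
  obtain M where M: "M \<ge> 0" "\<And>x k. V x k \<le> M * (1 + \<bar>real_of_int x\<bar> + real k)"
    using inv_M[OF V] by blast
  define K where "K = (ch + cb) * (1 + c0) + M * (1 + 3 * c0)"
  have K0: "K \<ge> 0" unfolding K_def using M c0_pos ch cb cv by (intro add_nonneg_nonneg mult_nonneg_nonneg) auto
  show ?thesis
  proof (intro exI[of _ K] conjI K0 allI)
    fix a k
    have eq: "Gg t V a k - cv * real_of_int a = ch * EH t a k + cb * EB t a k + EN t V a k"
      unfolding Gg_def by simp
    show "0 \<le> Gg t V a k - cv * real_of_int a"
      unfolding eq using EH_nonneg EB_nonneg EN_nonneg[OF V] ch cb cv
      by (intro add_nonneg_nonneg mult_nonneg_nonneg) auto
    have h: "\<bar>real_of_int a\<bar> + c0 * (1 + real k) \<le> (1 + c0) * (1 + \<bar>real_of_int a\<bar> + real k)"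
      using c0_pos by (simp add: algebra_simps)
    have e1: "ch * EH t a k \<le> ch * ((1 + c0) * (1 + \<bar>real_of_int a\<bar> + real k))"
      using EH_ub[of t a k] h ch by (intro mult_left_mono) auto
    have e2: "cb * EB t a k \<le> cb * ((1 + c0) * (1 + \<bar>real_of_int a\<bar> + real k))"
      using EB_ub[of t a k] h cb cv by (intro mult_left_mono) auto
    have e3: "EN t V a k \<le> M * (1 + 3 * c0) * (1 + \<bar>real_of_int a\<bar> + real k)"
    proof -
      have "3 * M * c0 * (1 + real k) \<le> 3 * M * c0 * (1 + \<bar>real_of_int a\<bar> + real k)"
        using M c0_pos by (intro mult_left_mono) auto
      thus ?thesis using EN_ub[OF V M, of t a k] by (simp add: algebra_simps)
    qed
    show "Gg t V a k - cv * real_of_int a \<le> K * (1 + \<bar>real_of_int a\<bar> + real k)"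
      unfolding eq K_def using e1 e2 e3 by (simp add: algebra_simps)
  qed
qed

lemma G_struct:
  assumes V: "inv V"
  shows "\<exists>d. smallest_minimizer (\<lambda>a. Gg t V a k) d"
proof -
  obtain a0 where "dlt (\<lambda>a. Gg t V a k) a0 < 0" using G_neg[OF V] by blast
  moreover obtain a1 where "dlt (\<lambda>a. Gg t V a k) a1 \<ge> 0" using G_pos[OF V] by blast
  ultimately show ?thesis using conv_exists_min[of "\<lambda>a. Gg t V a k" a0 a1] G_mono[OF V] by blast
qed

lemma inv_step:
  fixes W :: "int \<Rightarrow> nat \<Rightarrow> real"
  assumes V: "inv V"
    and W: "\<And>x k. W x k = Inf {Gg t V a k - cv * real_of_int x | a. a \<ge> x}"
  shows "inv W"
proof -
  define d where "d k = (SOME d. smallest_minimizer (\<lambda>a. Gg t V a k) d)" for k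
  have sm: "smallest_minimizer (\<lambda>a. Gg t V a k) (d k)" for k
    unfolding d_def using G_struct[OF V] by (rule someI_ex)
  note gm = G_mono[OF V]
  have Weq: "W x k = Gg t V (max x (d k)) k - cv * real_of_int x" for x k
  proof -
    have "Inf {Gg t V a k - cv * real_of_int x | a. a \<ge> x} = Gg t V (max x (d k)) k - cv * real_of_int x"
    proof (rule cInf_eq_minimum)
      show "Gg t V (max x (d k)) k - cv * real_of_int x \<in> {Gg t V a k - cv * real_of_int x | a. a \<ge> x}" by auto
      fix y assume "y \<in> {Gg t V a k - cv * real_of_int x | a. a \<ge> x}"
      then obtain a where "a \<ge> x" "y = Gg t V a k - cv * real_of_int x" by auto
      thus "Gg t V (max x (d k)) k - cv * real_of_int x \<le> y"
        using min_above[OF sm gm, of x a] by simp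
    qed
    thus ?thesis using W by simp
  qed
  have dW: "dV W x k = (if x < d k then -cv else dlt (\<lambda>a. Gg t V a k) x - cv)" for x k
  proof (cases "x < d k")
    case True
    hence "max (x + 1) (d k) = d k" "max x (d k) = d k" by auto
    thus ?thesis using True unfolding dV_def Weq by (simp add: algebra_simps)
  next
    case False
    hence "max (x + 1) (d k) = x + 1" "max x (d k) = x" by auto
    thus ?thesis using False unfolding dV_def Weq dlt_def by (simp add: algebra_simps)
  qed
  have dpos: "\<And>x k. d k \<le> x \<Longrightarrow> 0 \<le> dlt (\<lambda>a. Gg t V a k) x" using sm_char(1)[OF sm gm] by blast
  obtain K where K: "K \<ge> 0" "\<And>a k. 0 \<le> Gg t V a k - cv * real_of_int a"
      "\<And>a k. Gg t V a k - cv * real_of_int a \<le> K * (1 + \<bar>real_of_int a\<bar> + real k)"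
    using Q_bounds[OF V, of t] by blast
  have dmono: "k \<le> k' \<Longrightarrow> d k \<le> d k'" for k k'
    by (rule sm_mono[OF sm sm gm G_anti[OF V]])
  have lb: "-cv \<le> dV W x k" for x k using dpos[of k x] by (simp add: dW)
  show ?thesis unfolding inv_def
  proof (intro conjI allI impI)
    fix x :: int and k :: nat
    have "0 \<le> Gg t V (max x (d k)) k - cv * real_of_int (max x (d k))" by (rule K(2))
    moreover have "cv * real_of_int x \<le> cv * real_of_int (max x (d k))" using cv by simp
    ultimately show "0 \<le> W x k" unfolding Weq by linarith
  next
    show "\<exists>M\<ge>0. \<forall>x k. W x k \<le> M * (1 + \<bar>real_of_int x\<bar> + real k)"
    proof (intro exI[of _ K] conjI allI K(1))
      fix x :: int and k :: nat
      have "W x k \<le> Gg t V x k - cv * real_of_int x" unfolding Weq using min_above[OF sm gm, of x x] by simp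
      thus "W x k \<le> K * (1 + \<bar>real_of_int x\<bar> + real k)" using K(3)[of x k] by linarith
    qed
  next
    fix x :: int and k :: nat show "-cv \<le> dV W x k" by (rule lb)
  next
    fix x y :: int and k :: nat assume xy: "x \<le> y"
    show "dV W x k \<le> dV W y k"
    proof (cases "x < d k")
      case True thus ?thesis using lb[of y k] by (simp add: dW)
    next
      case False thus ?thesis using xy gm[OF xy, of t k] by (simp add: dW)
    qed
  next
    fix x :: int and k k' :: nat assume kk: "k \<le> k'"
    show "dV W x k' \<le> dV W x k"
    proof (cases "x < d k'")
      case True thus ?thesis using lb[of x k] by (simp add: dW)
    next
      case False
      hence "\<not> x < d k" using dmono[OF kk] by simp
      thus ?thesis using False G_anti[OF V kk, of t x] by (simp add: dW)
    qed
  next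
    fix k :: nat show "\<exists>x. dV W x k \<le> 0" using cv by (intro exI[of _ "d k - 1"]) (simp add: dW)
  qed
qed

end


context sp begin

lemma Q_eq: "C_cost cv ch cb alpha0 beta0 N t a x k + E_next alpha0 beta0 N t V a k = Gg t V a k - cv * real_of_int x"
  unfolding C_cost_def Gg_def EH_eq EB_eq EN_eq by (simp add: algebra_simps)

lemma inv_zero: "inv (\<lambda>x k. 0)"
  unfolding inv_def dV_def using cv by auto

lemma inv_all: "inv (V_rem cv ch cb alpha0 beta0 N T m)"
proof (induction m)
  case 0 thus ?case using inv_zero by simp
next
  case (Suc m)
  show ?case
  proof (rule inv_step[OF Suc.IH])
    fix x k
    show "V_rem cv ch cb alpha0 beta0 N T (Suc m) x k =
      Inf {Gg (T - Suc m) (V_rem cv ch cb alpha0 beta0 N T m) a k - cv * real_of_int x | a. a \<ge> x}"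
      by (simp add: Q_eq)
  qed
qed

lemma G_fun_eq: "G_fun cv ch cb alpha0 beta0 N T t a k = Gg t (V_til cv ch cb alpha0 beta0 N T (t + 1)) a k"
  unfolding G_fun_def Gg_def EH_eq EB_eq EN_eq ..

lemma Q_act_eq: "Q_act cv ch cb alpha0 beta0 N T t a x k = G_fun cv ch cb alpha0 beta0 N T t a k - cv * real_of_int x"
  unfolding Q_act_def G_fun_eq Q_eq ..

lemma inv_til: "inv (V_til cv ch cb alpha0 beta0 N T t)"
  unfolding V_til_def by (rule inv_all)

lemma main:
  "(\<forall>k. \<exists>\<delta>. smallest_minimizer (\<lambda>a. G_fun cv ch cb alpha0 beta0 N T t a k) \<delta>
       \<and> (\<forall>x. (x < \<delta> \<longrightarrow> optimal_act cv ch cb alpha0 beta0 N T t x k \<delta>)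
            \<and> (\<delta> \<le> x \<longrightarrow> optimal_act cv ch cb alpha0 beta0 N T t x k x)))
   \<and> (\<forall>k k' \<delta> \<delta>'. k \<le> k'
        \<and> smallest_minimizer (\<lambda>a. G_fun cv ch cb alpha0 beta0 N T t a k) \<delta>
        \<and> smallest_minimizer (\<lambda>a. G_fun cv ch cb alpha0 beta0 N T t a k') \<delta>'
        \<longrightarrow> \<delta> \<le> \<delta>')"
proof -
  define V where "V = V_til cv ch cb alpha0 beta0 N T (t + 1)"
  have V: "inv V" unfolding V_def by (rule inv_til)
  have Geq: "(\<lambda>a. G_fun cv ch cb alpha0 beta0 N T t a k) = (\<lambda>a. Gg t V a k)" for k
    unfolding V_def G_fun_eq ..
  have opt: "optimal_act cv ch cb alpha0 beta0 N T t x k a \<longleftrightarrow> x \<le> a \<and> (\<forall>b\<ge>x. Gg t V a k \<le> Gg t V b k)" for x k a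
    unfolding optimal_act_def Q_act_eq G_fun_eq V_def by auto
  show ?thesis
  proof (intro conjI allI impI)
    fix k :: nat
    obtain d where d: "smallest_minimizer (\<lambda>a. Gg t V a k) d" using G_struct[OF V] by blast
    show "\<exists>\<delta>. smallest_minimizer (\<lambda>a. G_fun cv ch cb alpha0 beta0 N T t a k) \<delta>
       \<and> (\<forall>x. (x < \<delta> \<longrightarrow> optimal_act cv ch cb alpha0 beta0 N T t x k \<delta>)
            \<and> (\<delta> \<le> x \<longrightarrow> optimal_act cv ch cb alpha0 beta0 N T t x k x))"
    proof (intro exI[of _ d] conjI allI impI)
      show "smallest_minimizer (\<lambda>a. G_fun cv ch cb alpha0 beta0 N T t a k) d" unfolding Geq by (rule d)
      fix x :: int
      assume "x < d"
      thus "optimal_act cv ch cb alpha0 beta0 N T t x k d"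
        unfolding opt using d unfolding smallest_minimizer_def by auto
    next
      fix x :: int
      assume dx: "d \<le> x"
      show "optimal_act cv ch cb alpha0 beta0 N T t x k x"
        unfolding opt using min_above[OF d G_mono[OF V]] dx by (metis max.orderE order_refl)
    qed
  next
    fix k k' :: nat and d d' :: int
    assume a: "k \<le> k' \<and> smallest_minimizer (\<lambda>a. G_fun cv ch cb alpha0 beta0 N T t a k) d
        \<and> smallest_minimizer (\<lambda>a. G_fun cv ch cb alpha0 beta0 N T t a k') d'"
    show "d \<le> d'"
      by (rule sm_mono[of "\<lambda>a. Gg t V a k" d "\<lambda>a. Gg t V a k'" d'])
         (use a Geq G_mono[OF V] G_anti[OF V] in auto)
  qed
qed

end

theorem proposition5:
  fixes N T :: nat and alpha0 beta0 :: real and cv ch cb :: "nat \<Rightarrow> real"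
  assumes "N \<ge> 1" and "T \<ge> 1" and "alpha0 > 0" and "beta0 > 0"
    and "\<forall>i\<in>{1..N}. cv i > 0 \<and> ch i > 0 \<and> cb i > 0 \<and> cb i > cv i"
  shows "\<forall>t<T. \<forall>i\<in>{1..N}.
           (\<forall>k. \<exists>\<delta>. smallest_minimizer (\<lambda>a. G_fun (cv i) (ch i) (cb i) alpha0 beta0 N T t a k) \<delta>
                 \<and> (\<forall>x. (x < \<delta> \<longrightarrow> optimal_act (cv i) (ch i) (cb i) alpha0 beta0 N T t x k \<delta>)
                      \<and> (\<delta> \<le> x \<longrightarrow> optimal_act (cv i) (ch i) (cb i) alpha0 beta0 N T t x k x)))
         \<and> (\<forall>k k' \<delta> \<delta>'. k \<le> k'
              \<and> smallest_minimizer (\<lambda>a. G_fun (cv i) (ch i) (cb i) alpha0 beta0 N T t a k) \<delta>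
              \<and> smallest_minimizer (\<lambda>a. G_fun (cv i) (ch i) (cb i) alpha0 beta0 N T t a k') \<delta>'
              \<longrightarrow> \<delta> \<le> \<delta>')"
proof (intro allI impI ballI)
  fix t i assume "t < T" "i \<in> {1..N}"
  hence c: "cv i > 0" "ch i > 0" "cb i > cv i" using assms(5) by auto
  interpret sp "cv i" "ch i" "cb i" alpha0 beta0 N T
    by unfold_locales (use c assms in auto)
  show "(\<forall>k. \<exists>\<delta>. smallest_minimizer (\<lambda>a. G_fun (cv i) (ch i) (cb i) alpha0 beta0 N T t a k) \<delta>
                 \<and> (\<forall>x. (x < \<delta> \<longrightarrow> optimal_act (cv i) (ch i) (cb i) alpha0 beta0 N T t x k \<delta>)
                      \<and> (\<delta> \<le> x \<longrightarrow> optimal_act (cv i) (ch i) (cb i) alpha0 beta0 N T t x k x)))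
         \<and> (\<forall>k k' \<delta> \<delta>'. k \<le> k'
              \<and> smallest_minimizer (\<lambda>a. G_fun (cv i) (ch i) (cb i) alpha0 beta0 N T t a k) \<delta>
              \<and> smallest_minimizer (\<lambda>a. G_fun (cv i) (ch i) (cb i) alpha0 beta0 N T t a k') \<delta>'
              \<longrightarrow> \<delta> \<le> \<delta>')" by (rule main)
qed


end
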